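(* Let $G$ be a graph and $L$ an $m$-assignment for $G$. Suppose $uv\in E(G)$, $|L(u)-L(v)|=d\ge 1$, and that for any $x\in L(u)$ and $y\in L(v)$ with $x\ne y$ there are at least $C$ proper $L$-colorings of $G$ that color $u$ with $x$ and $v$ with $y$. Then \[P(G,L)\ge P_{DP}(G,m)+Cd.\]
   Context: An $m$-assignment $L$ assigns to each vertex $w$ a set $L(w)$ of $m$ colors; $P(G,L)$ is the number of proper colorings $f$ of $G$ with $f(w)\in L(w)$ for all $w$. A DP-cover of $G$ is a pair $\mathcal{H}=(L,H)$ where $H$ is a graph and $L:V(G)\to 2^{V(H)}$ such that $\{L(v):v\in V(G)\}$ partitions $V(H)$ into $|V(G)|$ parts, for every edge $uv$ of $G$ the edges of $H$ between $L(u)$ and $L(v)$ form a matching (possibly empty, not necessarily perfect), and every edge of $H$ lies between $L(u)$ and $L(v)$ for some edge $uv\in E(G)$. It is an $m$-fold cover if $|L(v)|=m$ for all $v$. A proper $\mathcal{H}$-coloring is an independent set of $H$ containing exactly one vertex of each $L(v)$; $P_{DP}(G,\mathcal{H})$ is their number, and the DP color function $P_{DP}(G,m)$ is the minimum of $P_{DP}(G,\mathcal{H})$ over all $m$-fold covers $\mathcal{H}$ of $G$. *)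

theory Defs
  imports "HOL-Library.FuncSet"
begin

definition graph :: "'v set \<Rightarrow> 'v set set \<Rightarrow> bool" where
  "graph V E \<longleftrightarrow> finite V \<and>
     (\<forall>e\<in>E. \<exists>x y. e = {x, y} \<and> x \<noteq> y \<and> x \<in> V \<and> y \<in> V)"

definition m_assignment :: "'v set \<Rightarrow> ('v \<Rightarrow> 'c set) \<Rightarrow> nat \<Rightarrow> bool" where
  "m_assignment V L m \<longleftrightarrow> (\<forall>w\<in>V. finite (L w) \<and> card (L w) = m)"

definition proper_L_colorings :: "'v set \<Rightarrow> 'v set set \<Rightarrow> ('v \<Rightarrow> 'c set) \<Rightarrow> ('v \<Rightarrow> 'c) set" where
  "proper_L_colorings V E L =
     {f \<in> Pi\<^sub>E V L. \<forall>x y. {x, y} \<in> E \<longrightarrow> f x \<noteq> f y}"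

definition P_list :: "'v set \<Rightarrow> 'v set set \<Rightarrow> ('v \<Rightarrow> 'c set) \<Rightarrow> nat" where
  "P_list V E L = card (proper_L_colorings V E L)"

definition DP_cover :: "'v set \<Rightarrow> 'v set set \<Rightarrow> ('v \<Rightarrow> 'h set) \<Rightarrow> 'h set \<Rightarrow> 'h set set \<Rightarrow> bool" where
  "DP_cover V E LH VH EH \<longleftrightarrow>
     graph VH EH \<and>
     VH = (\<Union>w\<in>V. LH w) \<and>
     (\<forall>w\<in>V. \<forall>w'\<in>V. w \<noteq> w' \<longrightarrow> LH w \<inter> LH w' = {}) \<and>
     (\<forall>e\<in>EH. \<exists>x y a b. e = {a, b} \<and> {x, y} \<in> E \<and> a \<in> LH x \<and> b \<in> LH y) \<and>
     (\<forall>x y. {x, y} \<in> E \<longrightarrow>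
        (\<forall>a\<in>LH x. \<forall>b\<in>LH y. \<forall>b'\<in>LH y. {a, b} \<in> EH \<and> {a, b'} \<in> EH \<longrightarrow> b = b'))"

definition m_fold_DP_cover :: "'v set \<Rightarrow> 'v set set \<Rightarrow> nat \<Rightarrow> ('v \<Rightarrow> 'h set) \<Rightarrow> 'h set \<Rightarrow> 'h set set \<Rightarrow> bool" where
  "m_fold_DP_cover V E m LH VH EH \<longleftrightarrow>
     DP_cover V E LH VH EH \<and> (\<forall>w\<in>V. finite (LH w) \<and> card (LH w) = m)"

definition DP_colorings :: "'v set \<Rightarrow> ('v \<Rightarrow> 'h set) \<Rightarrow> 'h set \<Rightarrow> 'h set set \<Rightarrow> 'h set set" where
  "DP_colorings V LH VH EH =
     {I. I \<subseteq> VH \<and> (\<forall>a\<in>I. \<forall>b\<in>I. {a, b} \<notin> EH) \<and> (\<forall>w\<in>V. card (I \<inter> LH w) = 1)}"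

definition P_DP_cover :: "'v set \<Rightarrow> ('v \<Rightarrow> 'h set) \<Rightarrow> 'h set \<Rightarrow> 'h set set \<Rightarrow> nat" where
  "P_DP_cover V LH VH EH = card (DP_colorings V LH VH EH)"

text \<open>Cover vertices are taken
  in the type 'v \<times> nat, which loses no generality (every m-fold cover of a finite graph
  is isomorphic to one whose vertex set lies in 'v \<times> nat).\<close>
definition P_DP :: "'v set \<Rightarrow> 'v set set \<Rightarrow> nat \<Rightarrow> nat" where
  "P_DP V E m = Inf {P_DP_cover V LH VH EH | LH VH EH :: ('v \<times> nat) set set.
                        m_fold_DP_cover V E m LH VH EH}"

end

theory Submission
  imports Defs
begin
theorem lemma22:
  fixes V :: "'v set" and E :: "'v set set" and L :: "'v \<Rightarrow> 'c set"
    and m d C :: nat and u v :: 'v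
  assumes "graph V E"
    and "m_assignment V L m"
    and "{u, v} \<in> E"
    and "card (L u - L v) = d" and "d \<ge> 1"
    and "\<forall>x\<in>L u. \<forall>y\<in>L v. x \<noteq> y \<longrightarrow>
           C \<le> card {f \<in> proper_L_colorings V E L. f u = x \<and> f v = y}"
  shows "P_list V E L \<ge> P_DP V E m + C * d"
proof -
  have finV: "finite V" using assms(1) unfolding graph_def by auto
  have Edge: "x \<noteq> y \<and> x \<in> V \<and> y \<in> V" if "{x,y} \<in> E" for x y
  proof -
    have "\<forall>e\<in>E. \<exists>a b. e = {a, b} \<and> a \<noteq> b \<and> a \<in> V \<and> b \<in> V"
      using assms(1) unfolding graph_def by simp
    from bspec[OF this that] obtain a b where ab: "{x,y} = {a,b}" "a \<noteq> b" "a \<in> V" "b \<in> V"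
      by (elim exE conjE) simp
    from ab(1) have "(x = a \<and> y = b) \<or> (x = b \<and> y = a)" by (simp add: doubleton_eq_iff)
    then show ?thesis using ab(2-4) by (elim disjE) simp_all
  qed
  have finL: "finite (L w)" "card (L w) = m" if "w \<in> V" for w
    using assms(2) that unfolding m_assignment_def by auto
  define U where "U = \<Union>(L ` V)"
  have finU: "finite U" unfolding U_def using finV finL by auto
  obtain enc :: "'c \<Rightarrow> nat" where enc: "inj_on enc U"
    using finite_imp_inj_to_nat_seg[OF finU] by blast
  have LU: "L w \<subseteq> U" if "w \<in> V" for w using that U_def by auto
  have uv: "u \<in> V" "v \<in> V" "u \<noteq> v" using Edge[OF assms(3)] by auto
  define A where "A = L u - L v"
  define B where "B = L v - L u"
  have cA: "card A = d" using assms(4) A_def by simp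
  have cB: "card B = d"
  proof -
    have "card B = m - card (L v \<inter> L u)" unfolding B_def
      using card_Diff_subset_Int finL uv by (metis finite_Int)
    moreover have "card A = m - card (L u \<inter> L v)" unfolding A_def
      using card_Diff_subset_Int finL uv by (metis finite_Int)
    ultimately show ?thesis using cA by (simp add: Int_commute)
  qed
  obtain \<sigma> where \<sigma>: "bij_betw \<sigma> A B"
    using finite_same_card_bij[of A B] cA cB finL uv A_def B_def by auto
  define LH where "LH = (\<lambda>w. {w} \<times> enc ` L w)"
  define VH where "VH = (\<Union>w\<in>V. LH w)"
  define EH0 where "EH0 = {{(x, enc c), (y, enc c)} | x y c. {x,y}\<in>E \<and> c \<in> L x \<and> c \<in> L y}"
  define EH1 where "EH1 = {{(u, enc a), (v, enc (\<sigma> a))} | a. a \<in> A}"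
  define EH where "EH = EH0 \<union> EH1"
  have LHI: "(w, enc c) \<in> LH w" if "c \<in> L w" for w c unfolding LH_def using that by simp
  have VHI: "(w, enc c) \<in> VH" if "w \<in> V" "c \<in> L w" for w c
    unfolding VH_def using LHI[OF that(2)] that(1) by blast
  have EH0I: "{(x, enc c), (y, enc c)} \<in> EH0" if "{x,y}\<in>E" "c \<in> L x" "c \<in> L y" for x y c
    unfolding EH0_def using that by blast
  have EH1I: "{(u, enc a), (v, enc (\<sigma> a))} \<in> EH1" if "a \<in> A" for a
    unfolding EH1_def using that by blast
  have cover: "m_fold_DP_cover V E m LH VH EH"
  proof -
    have AL: "A \<subseteq> L u" "B \<subseteq> L v" "A \<inter> L v = {}" "B \<inter> L u = {}" using A_def B_def by auto
    have sA: "\<sigma> a \<in> B" if "a \<in> A" for a using \<sigma> that bij_betwE by blast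
    have sinj: "inj_on \<sigma> A" using \<sigma> bij_betw_def by blast
    have encI: "c = c'" if "enc c = enc c'" "c \<in> L w" "c' \<in> L w'" "w \<in> V" "w' \<in> V" for c c' w w'
    proof -
      have "c \<in> U" "c' \<in> U" using that LU by auto
      then show ?thesis using inj_onD[OF enc that(1)] by simp
    qed
    have key: "(c1 = c \<and> c \<in> L x \<and> c \<in> L y) \<or> (x = u \<and> y = v \<and> c \<in> A \<and> c1 = \<sigma> c)
       \<or> (x = v \<and> y = u \<and> c1 \<in> A \<and> c = \<sigma> c1)"
      if "x \<in> V" "y \<in> V" "c \<in> L x" "c1 \<in> L y" "{(x, enc c), (y, enc c1)} \<in> EH" for x y c c1
    proof (cases "{(x, enc c), (y, enc c1)} \<in> EH0")
      case True
      then obtain x' y' c' where e: "{(x, enc c), (y, enc c1)} = {(x', enc c'), (y', enc c')}"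
        "{x',y'}\<in>E" "c' \<in> L x'" "c' \<in> L y'" unfolding EH0_def by blast
      have V': "x' \<in> V" "y' \<in> V" using Edge[OF e(2)] by auto
      from e(1) have "(x = x' \<and> enc c = enc c' \<and> y = y' \<and> enc c1 = enc c') \<or>
                      (x = y' \<and> enc c = enc c' \<and> y = x' \<and> enc c1 = enc c')"
        unfolding doubleton_eq_iff by auto
      then have "enc c = enc c' \<and> enc c1 = enc c'" by blast
      then have "c = c' \<and> c1 = c'" using encI[OF _ that(3) e(3) that(1) V'(1)]
        encI[OF _ that(4) e(3) that(2) V'(1)] by blast
      then show ?thesis using that by auto
    next
      case False
      then have "{(x, enc c), (y, enc c1)} \<in> EH1" using that EH_def by auto
      then obtain a where e: "{(x, enc c), (y, enc c1)} = {(u, enc a), (v, enc (\<sigma> a))}" "a \<in> A"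
        unfolding EH1_def by blast
      have aa: "a \<in> L u" "\<sigma> a \<in> L v" using e(2) sA AL by auto
      from e(1) have "(x = u \<and> enc c = enc a \<and> y = v \<and> enc c1 = enc (\<sigma> a)) \<or>
                      (x = v \<and> enc c = enc (\<sigma> a) \<and> y = u \<and> enc c1 = enc a)"
        unfolding doubleton_eq_iff by auto
      then have "(x = u \<and> y = v \<and> c = a \<and> c1 = \<sigma> a) \<or> (x = v \<and> y = u \<and> c = \<sigma> a \<and> c1 = a)"
      proof (elim disjE conjE)
        assume h: "x = u" "enc c = enc a" "y = v" "enc c1 = enc (\<sigma> a)"
        then have "c = a" using encI[OF h(2) that(3) aa(1) that(1) uv(1)] by simp
        moreover have "c1 = \<sigma> a" using encI[OF h(4) that(4) aa(2) that(2) uv(2)] by simp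
        ultimately show ?thesis using h by simp
      next
        assume h: "x = v" "enc c = enc (\<sigma> a)" "y = u" "enc c1 = enc a"
        then have "c = \<sigma> a" using encI[OF h(2) that(3) aa(2) that(1) uv(2)] by simp
        moreover have "c1 = a" using encI[OF h(4) that(4) aa(1) that(2) uv(1)] by simp
        ultimately show ?thesis using h by simp
      qed
      then show ?thesis using e(2) by auto
    qed
    have g: "graph VH EH" unfolding graph_def
    proof (intro conjI ballI)
      show "finite VH" unfolding VH_def LH_def using finV finL by auto
    next
      fix e assume "e \<in> EH"
      then have "e \<in> EH0 \<or> e \<in> EH1" unfolding EH_def by simp
      then show "\<exists>x y. e = {x, y} \<and> x \<noteq> y \<and> x \<in> VH \<and> y \<in> VH"
      proof (elim disjE)
        assume "e \<in> EH0"
        then obtain x y c where "e = {(x, enc c), (y, enc c)}" "{x,y}\<in>E" "c \<in> L x" "c \<in> L y"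
          unfolding EH0_def by blast
        then have "e = {(x, enc c), (y, enc c)} \<and> (x, enc c) \<noteq> (y, enc c) \<and> (x, enc c) \<in> VH \<and> (y, enc c) \<in> VH"
          using Edge[of x y] VHI[of x c] VHI[of y c] by simp
        then show ?thesis by blast
      next
        assume "e \<in> EH1"
        then obtain a where "e = {(u, enc a), (v, enc (\<sigma> a))}" "a \<in> A" unfolding EH1_def by blast
        moreover have "\<sigma> a \<in> L v" "a \<in> L u" using \<open>a \<in> A\<close> sA AL by auto
        ultimately have "e = {(u, enc a), (v, enc (\<sigma> a))} \<and> (u, enc a) \<noteq> (v, enc (\<sigma> a)) \<and> (u, enc a) \<in> VH \<and> (v, enc (\<sigma> a)) \<in> VH"
          using uv VHI[of u a] VHI[of v "\<sigma> a"] by simp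
        then show ?thesis by blast
      qed
    qed
    have e4: "\<forall>e\<in>EH. \<exists>x y a b. e = {a, b} \<and> {x, y} \<in> E \<and> a \<in> LH x \<and> b \<in> LH y"
    proof
      fix e assume "e \<in> EH"
      then have "e \<in> EH0 \<or> e \<in> EH1" unfolding EH_def by simp
      then show "\<exists>x y a b. e = {a, b} \<and> {x, y} \<in> E \<and> a \<in> LH x \<and> b \<in> LH y"
      proof (elim disjE)
        assume "e \<in> EH0"
        then obtain x y c where "e = {(x, enc c), (y, enc c)}" "{x,y}\<in>E" "c \<in> L x" "c \<in> L y"
          unfolding EH0_def by blast
        then have "e = {(x, enc c), (y, enc c)} \<and> {x, y} \<in> E \<and> (x, enc c) \<in> LH x \<and> (y, enc c) \<in> LH y"
          using LHI by simp
        then show ?thesis by blast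
      next
        assume "e \<in> EH1"
        then obtain a where "e = {(u, enc a), (v, enc (\<sigma> a))}" "a \<in> A" unfolding EH1_def by blast
        moreover have "\<sigma> a \<in> L v" "a \<in> L u" using \<open>a \<in> A\<close> sA AL by auto
        ultimately have "e = {(u, enc a), (v, enc (\<sigma> a))} \<and> {u, v} \<in> E \<and> (u, enc a) \<in> LH u \<and> (v, enc (\<sigma> a)) \<in> LH v"
          using assms(3) LHI by simp
        then show ?thesis by blast
      qed
    qed
    have e5: "\<forall>x y. {x, y} \<in> E \<longrightarrow>
        (\<forall>a\<in>LH x. \<forall>b\<in>LH y. \<forall>b'\<in>LH y. {a, b} \<in> EH \<and> {a, b'} \<in> EH \<longrightarrow> b = b')"
    proof (intro allI impI ballI)
      fix x y a b b' assume xy: "{x,y} \<in> E" and ab: "a \<in> LH x" "b \<in> LH y" "b' \<in> LH y"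
        and ee: "{a, b} \<in> EH \<and> {a, b'} \<in> EH"
      obtain c c1 c2 where cc: "a = (x, enc c)" "b = (y, enc c1)" "b' = (y, enc c2)"
        "c \<in> L x" "c1 \<in> L y" "c2 \<in> L y" using ab unfolding LH_def by blast
      have V: "x \<in> V" "y \<in> V" "x \<noteq> y" using Edge[OF xy] by auto
      have k1: "(c1 = c \<and> c \<in> L x \<and> c \<in> L y) \<or> (x = u \<and> y = v \<and> c \<in> A \<and> c1 = \<sigma> c)
       \<or> (x = v \<and> y = u \<and> c1 \<in> A \<and> c = \<sigma> c1)" using key[OF V(1,2) cc(4,5)] ee cc(1,2) by simp
      have k2: "(c2 = c \<and> c \<in> L x \<and> c \<in> L y) \<or> (x = u \<and> y = v \<and> c \<in> A \<and> c2 = \<sigma> c)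
       \<or> (x = v \<and> y = u \<and> c2 \<in> A \<and> c = \<sigma> c2)" using key[OF V(1,2) cc(4,6)] ee cc(1,3) by simp
      have "c1 = c2" using k1 k2
      proof (elim disjE conjE)
      qed (use V AL sA inj_onD[OF sinj] in fastforce)+
      then show "b = b'" using cc by simp
    qed
    have e3: "\<forall>w\<in>V. \<forall>w'\<in>V. w \<noteq> w' \<longrightarrow> LH w \<inter> LH w' = {}" unfolding LH_def by blast
    have "DP_cover V E LH VH EH" unfolding DP_cover_def
      by (intro conjI g e3 e4 e5 VH_def)
    moreover have "finite (LH w) \<and> card (LH w) = m" if "w \<in> V" for w
      unfolding LH_def using finL[OF that] LU[OF that] enc
      by (simp add: card_cartesian_product card_image inj_on_subset)
    ultimately show ?thesis unfolding m_fold_DP_cover_def by blast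
  qed
  have le1: "P_DP V E m \<le> P_DP_cover V LH VH EH"
  proof -
    have mem: "P_DP_cover V LH VH EH \<in> {P_DP_cover V LH VH EH | LH VH EH :: ('v \<times> nat) set set.
                        m_fold_DP_cover V E m LH VH EH}"
      using cover by blast
    show ?thesis unfolding P_DP_def Inf_nat_def by (rule Least_le[where P="\<lambda>x. x \<in> _", OF mem])
  qed
  define P where "P = proper_L_colorings V E L"
  define S where "S = {f\<in>P. \<not> (f u \<in> A \<and> f v = \<sigma> (f u))}"
  define Bad where "Bad = (\<lambda>a. {f\<in>P. f u = a \<and> f v = \<sigma> a})"
  define \<phi> where "\<phi> = (\<lambda>f. (\<lambda>w. (w, enc (f w))) ` V)"
  have sub: "DP_colorings V LH VH EH \<subseteq> \<phi> ` S"
  proof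
    fix I assume "I \<in> DP_colorings V LH VH EH"
    then have I: "I \<subseteq> VH" "\<forall>a\<in>I. \<forall>b\<in>I. {a, b} \<notin> EH" "\<forall>w\<in>V. card (I \<inter> LH w) = 1"
      unfolding DP_colorings_def by auto
    have "\<exists>c\<in>L w. I \<inter> LH w = {(w, enc c)}" if w: "w \<in> V" for w
    proof -
      have "card (I \<inter> LH w) = 1" using I(3) w by (rule bspec)
      then obtain p where p: "I \<inter> LH w = {p}" by (rule card_1_singletonE)
      then have "p \<in> LH w" by auto
      then obtain c where "c \<in> L w" "p = (w, enc c)" unfolding LH_def by blast
      then show ?thesis using p by blast
    qed
    then obtain g where g: "\<forall>w\<in>V. g w \<in> L w \<and> I \<inter> LH w = {(w, enc (g w))}"
      using bchoice[of V "\<lambda>w c. c \<in> L w \<and> I \<inter> LH w = {(w, enc c)}"] by blast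
    define f where "f = restrict g V"
    have gw: "g w \<in> L w" "I \<inter> LH w = {(w, enc (g w))}" if "w \<in> V" for w using g that by auto
    have gin: "(w, enc (g w)) \<in> I" if "w \<in> V" for w using gw(2)[OF that] by blast
    have If: "I = \<phi> f"
    proof -
      have "I = (\<Union>w\<in>V. I \<inter> LH w)" using I(1) unfolding VH_def by blast
      also have "\<dots> = (\<Union>w\<in>V. {(w, enc (g w))})" using gw(2) by (intro SUP_cong) simp_all
      also have "\<dots> = \<phi> f" unfolding \<phi>_def f_def by auto
      finally show ?thesis .
    qed
    have fP: "f \<in> P" unfolding P_def proper_L_colorings_def
    proof (intro CollectI conjI allI impI)
      show "f \<in> Pi\<^sub>E V L" unfolding f_def using gw(1) by (simp add: restrict_PiE_iff)
    next
      fix x y assume xy: "{x, y} \<in> E"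
      have V: "x \<in> V" "y \<in> V" using Edge[OF xy] by auto
      show "f x \<noteq> f y"
      proof
        assume "f x = f y"
        then have eq: "g x = g y" using V f_def by auto
        have "g x \<in> L y" using eq gw(1)[OF V(2)] by simp
        then have "{(x, enc (g x)), (y, enc (g x))} \<in> EH" unfolding EH_def
          using EH0I[OF xy gw(1)[OF V(1)]] by simp
        moreover have "{(x, enc (g x)), (y, enc (g y))} \<notin> EH" using I(2) gin[OF V(1)] gin[OF V(2)] by blast
        ultimately show False using eq by simp
      qed
    qed
    have fS: "f \<in> S" unfolding S_def
    proof (intro CollectI conjI fP notI)
      assume "f u \<in> A \<and> f v = \<sigma> (f u)"
      then have "g u \<in> A \<and> g v = \<sigma> (g u)" using uv f_def by auto
      then have "{(u, enc (g u)), (v, enc (g v))} \<in> EH" unfolding EH_def using EH1I[of "g u"] by simp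
      moreover have "{(u, enc (g u)), (v, enc (g v))} \<notin> EH" using I(2) gin[OF uv(1)] gin[OF uv(2)] by blast
      ultimately show False by simp
    qed
    show "I \<in> \<phi> ` S" using If fS by blast
  qed
  have finP: "finite P" unfolding P_def proper_L_colorings_def
    by (rule finite_subset[OF _ finite_PiE[OF finV, of L]]) (auto simp: finL)
  have c1: "P_DP_cover V LH VH EH \<le> card S"
  proof -
    have finS: "finite S" unfolding S_def using finP by simp
    have "card (DP_colorings V LH VH EH) \<le> card (\<phi> ` S)"
      by (rule card_mono[OF finite_imageI[OF finS] sub])
    also have "\<dots> \<le> card S" by (rule card_image_le[OF finS])
    finally show ?thesis by (simp add: P_DP_cover_def)
  qed
  have Pdec: "P = S \<union> (\<Union>a\<in>A. Bad a)" "S \<inter> (\<Union>a\<in>A. Bad a) = {}"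
    unfolding S_def Bad_def by auto
  have finA: "finite A" using A_def finL uv by auto
  have cU: "card (\<Union>a\<in>A. Bad a) = (\<Sum>a\<in>A. card (Bad a))"
    by (rule card_UN_disjoint[OF finA]) (auto simp: Bad_def intro: finite_subset[OF _ finP])
  have "(\<Sum>a\<in>A. card (Bad a)) \<ge> (\<Sum>a\<in>A. C)"
  proof (rule sum_mono)
    fix a assume a: "a \<in> A"
    then have "\<sigma> a \<in> B" using \<sigma> bij_betwE by blast
    then have h: "a \<in> L u" "\<sigma> a \<in> L v" "a \<noteq> \<sigma> a" using a A_def B_def by auto
    show "C \<le> card (Bad a)" using assms(6)[rule_format, OF h] unfolding Bad_def P_def .
  qed
  then have "card (\<Union>a\<in>A. Bad a) \<ge> C * d" using cU cA by (simp add: mult.commute)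
  moreover have "card P = card S + card (\<Union>a\<in>A. Bad a)"
    using Pdec finP by (metis card_Un_disjoint finite_Un)
  ultimately show ?thesis using le1 c1 unfolding P_list_def P_def by linarith
qed
end
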